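(* Let $a,b\in\mathbb{R}$ with $a<b$, let $n\in\mathbb{N}$ with $n\ge2$, let $q>1$, $p=\frac{q}{q-1}$, and assume $2q-p-1>0$. Then $$\left|A(a^n,b^n)-L_n^n(a,b)\right|\le \frac{n(n-1)(b-a)^2}{2}\left(\frac{q-1}{2q-p-1}\right)^{\frac{q-1}{q}}\bigl(\beta(p+1,q+1)\bigr)^{\frac1q}\left(\max\{|a|^{(n-2)q},|b|^{(n-2)q}\}\right)^{\frac1q}.$$
   Context: $A(x,y)=\frac{x+y}{2}$ (arithmetic mean). For $a\ne b$ and $n\in\mathbb{Z}\setminus\{-1,0\}$, $L_n(a,b)=\left[\frac{b^{n+1}-a^{n+1}}{(n+1)(b-a)}\right]^{1/n}$ (generalized logarithmic mean), so $L_n^n(a,b)=\frac{b^{n+1}-a^{n+1}}{(n+1)(b-a)}$. $\beta(x,y)=\int_0^1 t^{x-1}(1-t)^{y-1}\,dt$. *)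

theory Defs
  imports "HOL-Analysis.Analysis"
begin

definition AM :: "real \<Rightarrow> real \<Rightarrow> real" where
  "AM x y = (x + y) / 2"

text \<open>n-th power of the generalized logarithmic mean, L_n^n(a,b), for a \<noteq> b, n \<noteq> -1, 0.\<close>
definition Ln_pow :: "int \<Rightarrow> real \<Rightarrow> real \<Rightarrow> real" where
  "Ln_pow n a b = (b powi (n + 1) - a powi (n + 1)) / (real_of_int (n + 1) * (b - a))"

definition beta_fn :: "real \<Rightarrow> real \<Rightarrow> real" where
  "beta_fn x y = integral {0..1} (\<lambda>t. t powr (x - 1) * (1 - t) powr (y - 1))"

end

theory Submission
  imports Defs
begin


lemma dpow: "((\<lambda>x::real. x^(Suc k)) has_real_derivative (real (Suc k) * x^k)) (at x)"
  using DERIV_pow[of "Suc k" x] by simp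
lemma gen1: assumes "(f has_real_derivative f') (at x)" "(g has_real_derivative g') (at x)"
  shows "((\<lambda>x. (c - f x)/2 + (x-a)*N*g x/2) has_real_derivative (-f'/2 + N*g x/2 + (x-a)*N*g'/2)) (at x)"
  using assms by (auto intro!: derivative_eq_intros simp: field_simps)
lemma gen0: assumes "(f has_real_derivative f') (at x)" "(g has_real_derivative g') (at x)" "N \<noteq> 0"
  shows "((\<lambda>x. (x-a)*(c+f x)/2 - (g x - d)/N) has_real_derivative ((c + f x)/2 + (x-a)*f'/2 - g'/N)) (at x)"
  using assms by (auto intro!: derivative_eq_intros simp: field_simps)
lemma d1lem: "((\<lambda>x. (a^Suc (Suc m) - x^Suc (Suc m))/2 + (x-a)*real (Suc (Suc m))*x^(Suc m)/2) has_real_derivative ((x-a)*(real (Suc (Suc m))*(real (Suc (Suc m))-1)*x^m)/2)) (at x)" for x::real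
proof -
  have r: "((\<lambda>x. (a^Suc (Suc m) - x^Suc (Suc m))/2 + (x-a)*real (Suc (Suc m))*x^(Suc m)/2) has_real_derivative (-(real (Suc (Suc m)) * x^(Suc m))/2 + real (Suc (Suc m))*x^(Suc m)/2 + (x-a)*real (Suc (Suc m))*(real (Suc m) * x^m)/2)) (at x)"
    by (rule gen1[OF dpow dpow])
  have eq: "(-(real (Suc (Suc m)) * x^(Suc m))/2 + real (Suc (Suc m))*x^(Suc m)/2 + (x-a)*real (Suc (Suc m))*(real (Suc m) * x^m)/2) = ((x-a)*(real (Suc (Suc m))*(real (Suc (Suc m))-1)*x^m)/2)"
    by (simp add: field_simps)
  show ?thesis using r unfolding eq .
qed
lemma d0lem: "((\<lambda>x. (x-a)*(a^Suc (Suc m)+x^Suc (Suc m))/2 - (x^Suc (Suc (Suc m)) - a^Suc (Suc (Suc m)))/(real (Suc (Suc m))+1)) has_real_derivative ((a^Suc (Suc m) - x^Suc (Suc m))/2 + (x-a)*real (Suc (Suc m))*x^(Suc m)/2)) (at x)" for x::real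
proof -
  have r: "((\<lambda>x. (x-a)*(a^Suc (Suc m)+x^Suc (Suc m))/2 - (x^Suc (Suc (Suc m)) - a^Suc (Suc (Suc m)))/(real (Suc (Suc m))+1)) has_real_derivative ((a^Suc (Suc m) + x^Suc (Suc m))/2 + (x-a)*(real (Suc (Suc m)) * x^(Suc m))/2 - (real (Suc (Suc (Suc m))) * x^Suc (Suc m))/(real (Suc (Suc m))+1))) (at x)"
    by (rule gen0[OF dpow dpow]) simp
  have eq: "((a^Suc (Suc m) + x^Suc (Suc m))/2 + (x-a)*(real (Suc (Suc m)) * x^(Suc m))/2 - (real (Suc (Suc (Suc m))) * x^Suc (Suc m))/(real (Suc (Suc m))+1)) = ((a^Suc (Suc m) - x^Suc (Suc m))/2 + (x-a)*real (Suc (Suc m))*x^(Suc m)/2)"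
    by (simp add: field_simps)
  show ?thesis using r unfolding eq .
qed


lemma hlp1: "0 \<le> (ss::real) \<Longrightarrow> LL \<le> KK \<Longrightarrow> KK * ss/2 - ss * LL/2 \<ge> 0"
proof -
  assume "0 \<le> ss" "LL \<le> KK" then have "ss * LL \<le> ss * KK" by (rule mult_left_mono[rotated])
  then show ?thesis by (simp add: mult.commute)
qed
lemma hlp2: "0 \<le> (ss::real) \<Longrightarrow> -KK \<le> LL \<Longrightarrow> KK * ss/2 + ss * LL/2 \<ge> 0"
proof -
  assume "0 \<le> ss" "-KK \<le> LL" then have "ss * (-KK) \<le> ss * LL" by (rule mult_left_mono[rotated])
  then show ?thesis by (simp add: mult.commute)
qed

lemma mono_helper:
  fixes g g' :: "real \<Rightarrow> real"
  assumes "a \<le> x" "\<And>t. (g has_real_derivative g' t) (at t)" "\<And>t. a \<le> t \<Longrightarrow> t \<le> x \<Longrightarrow> g' t \<ge> 0"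
  shows "g a \<le> g x"
proof (rule DERIV_nonneg_imp_increasing_open[OF assms(1)])
  show "\<And>t. a < t \<Longrightarrow> t < x \<Longrightarrow> \<exists>y. (g has_real_derivative y) (at t) \<and> 0 \<le> y"
    using assms by (meson less_imp_le)
  show "continuous_on {a..x} g"
    using assms(2) by (meson DERIV_isCont continuous_at_imp_continuous_on)
qed

lemma part1:
  fixes a b :: real and m :: nat
  assumes ab: "a < b"
  shows "\<bar>(a^(Suc (Suc m)) + b^(Suc (Suc m)))/2 - (b^(Suc (Suc m)+1) - a^(Suc (Suc m)+1))/((real (Suc (Suc m))+1)*(b-a))\<bar>
     \<le> real (Suc (Suc m)) * (real (Suc (Suc m)) - 1) * (max \<bar>a\<bar> \<bar>b\<bar> ^ m) * (b-a)^2/12"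
proof -
  define n where "n = Suc (Suc m)"
  define K where "K = real n * (real n - 1) * (max \<bar>a\<bar> \<bar>b\<bar> ^ m)"
  have f2: "real n * (real n - 1) * t^m \<le> K" "- K \<le> real n * (real n - 1) * t^m" if "a \<le> t" "t \<le> b" for t
  proof -
    have "\<bar>t\<bar> \<le> max \<bar>a\<bar> \<bar>b\<bar>" using that by auto
    hence "\<bar>t^m\<bar> \<le> max \<bar>a\<bar> \<bar>b\<bar> ^ m" by (simp add: power_abs power_mono)
    moreover have h: "real n * (real n - 1) \<ge> 0" "real n - 1 \<ge> 0" by (simp_all add: n_def)
    ultimately have "\<bar>real n * (real n - 1) * t^m\<bar> \<le> K"
      unfolding K_def abs_mult using mult_left_mono[OF _ h(1)] by simp
    thus "real n * (real n - 1) * t^m \<le> K" "- K \<le> real n * (real n - 1) * t^m" by auto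
  qed
  define phi1 where "phi1 x = (a^n - x^n)/2 + (x-a)*real n*x^(Suc m)/2" for x
  define phi0 where "phi0 x = (x-a)*(a^n+x^n)/2 - (x^(Suc n) - a^(Suc n))/(real n+1)" for x
  have d1: "(phi1 has_real_derivative ((x-a)*(real n*(real n-1)*x^m)/2)) (at x)" for x
    unfolding phi1_def n_def by (rule d1lem)
  have d0: "(phi0 has_real_derivative phi1 x) (at x)" for x
    unfolding phi0_def phi1_def n_def by (rule d0lem)
  have A: "\<bar>phi1 x\<bar> \<le> K*(x-a)^2/4" if "a \<le> x" "x \<le> b" for x
  proof -
    have "(\<lambda>t. K*(t-a)^2/4 - phi1 t) a \<le> (\<lambda>t. K*(t-a)^2/4 - phi1 t) x"
    proof (rule mono_helper[OF that(1)])
      show "((\<lambda>t. K*(t-a)^2/4 - phi1 t) has_real_derivative (K*(t-a)/2 - (t-a)*(real n*(real n-1)*t^m)/2)) (at t)" for t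
        by (rule derivative_eq_intros d1 refl | simp)+ 
      show "K*(t-a)/2 - (t-a)*(real n*(real n-1)*t^m)/2 \<ge> 0" if "a \<le> t" "t \<le> x" for t
        using f2(1)[of t] that \<open>x \<le> b\<close> by (intro hlp1) auto
    qed
    moreover have "(\<lambda>t. K*(t-a)^2/4 + phi1 t) a \<le> (\<lambda>t. K*(t-a)^2/4 + phi1 t) x"
    proof (rule mono_helper[OF that(1)])
      show "((\<lambda>t. K*(t-a)^2/4 + phi1 t) has_real_derivative (K*(t-a)/2 + (t-a)*(real n*(real n-1)*t^m)/2)) (at t)" for t
        by (rule derivative_eq_intros d1 refl | simp)+ 
      show "K*(t-a)/2 + (t-a)*(real n*(real n-1)*t^m)/2 \<ge> 0" if "a \<le> t" "t \<le> x" for t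
        using f2(2)[of t] that \<open>x \<le> b\<close> by (intro hlp2) auto
    qed
    moreover have "phi1 a = 0" by (simp add: phi1_def)
    ultimately show ?thesis by (simp add: abs_le_iff)
  qed
  have B: "\<bar>phi0 x\<bar> \<le> K*(x-a)^3/12" if "a \<le> x" "x \<le> b" for x
  proof -
    have "(\<lambda>t. K*(t-a)^3/12 - phi0 t) a \<le> (\<lambda>t. K*(t-a)^3/12 - phi0 t) x"
    proof (rule mono_helper[OF that(1)])
      show "((\<lambda>t. K*(t-a)^3/12 - phi0 t) has_real_derivative (K*(t-a)^2/4 - phi1 t)) (at t)" for t
        by (rule derivative_eq_intros d0 refl | simp)+
      show "K*(t-a)^2/4 - phi1 t \<ge> 0" if "a \<le> t" "t \<le> x" for t
        using A[of t] that \<open>x \<le> b\<close> by simp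
    qed
    moreover have "(\<lambda>t. K*(t-a)^3/12 + phi0 t) a \<le> (\<lambda>t. K*(t-a)^3/12 + phi0 t) x"
    proof (rule mono_helper[OF that(1)])
      show "((\<lambda>t. K*(t-a)^3/12 + phi0 t) has_real_derivative (K*(t-a)^2/4 + phi1 t)) (at t)" for t
        by (rule derivative_eq_intros d0 refl | simp)+
      show "K*(t-a)^2/4 + phi1 t \<ge> 0" if "a \<le> t" "t \<le> x" for t
        using A[of t] that \<open>x \<le> b\<close> by simp
    qed
    moreover have "phi0 a = 0" by (simp add: phi0_def)
    ultimately show ?thesis by (simp add: abs_le_iff)
  qed
  define E where "E = (a^n + b^n)/2 - (b^(n+1) - a^(n+1))/((real n+1)*(b-a))"
  have q1: "(b-a)*((b^(n+1)-a^(n+1))/((real n+1)*(b-a))) = (b^(Suc n)-a^(Suc n))/(real n+1)"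
    using ab by simp
  have "phi0 b = (b-a) * E" unfolding phi0_def E_def using q1 by (simp add: right_diff_distrib)
  with B[of b] ab have "(b-a)*\<bar>E\<bar> \<le> (b-a) * (K*(b-a)^2/12)"
    by (simp add: abs_mult power3_eq_cube power2_eq_square mult.assoc)
  hence "\<bar>E\<bar> \<le> K*(b-a)^2/12" using ab by simp
  thus ?thesis unfolding E_def K_def n_def by simp
qed



lemma pointwise:
  fixes p q r s t :: real
  assumes pq: "p > 1" "q > 1" "1/p + 1/q = 1" and r: "r + p/q = 1" and s: "s > 0"
    and t: "0 \<le> t" "t \<le> 1"
  shows "t*(1-t) \<le> (s powr p * t powr (r*p))/p + (s powr (-q) * (t powr p * (1-t) powr q))/q"
proof (cases "t = 0")
  case True then show ?thesis using pq s by simp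
next
  case False
  hence tp: "t > 0" using t by simp
  define x where "x = s * t powr r"
  define y where "y = t powr (p/q) * (1-t) / s"
  have x0: "x \<ge> 0" "y \<ge> 0" using s t by (auto simp: x_def y_def)
  have "x*y = t powr (r + p/q) * (1-t)" unfolding x_def y_def using s by (simp add: powr_add)
  also have "\<dots> = t*(1-t)" using r tp by simp
  finally have xy: "x*y = t*(1-t)" .
  have xp: "x powr p = s powr p * t powr (r*p)"
    unfolding x_def using s tp by (simp add: powr_mult powr_powr)
  have yq: "y powr q = s powr (-q) * (t powr p * (1-t) powr q)"
    unfolding y_def using s tp t pq by (simp add: powr_mult powr_divide powr_powr powr_minus divide_simps)
  show ?thesis using Youngs_inequality[OF pq x0] xy xp yq by simp
qed

lemma opt:
  fixes p q A B :: real
  assumes pq: "p > 1" "q > 1" "1/p + 1/q = 1" and A: "A > 0" and B: "B > 0"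
  shows "\<exists>s>0. s powr p * A / p + s powr (-q) * B / q = A powr (1/p) * B powr (1/q)"
proof -
  define \<alpha> where "\<alpha> = ln A"
  define \<beta> where "\<beta> = ln B"
  define \<sigma> where "\<sigma> = (\<beta> - \<alpha>)/(p+q)"
  have pq2: "p + q = p*q" using pq(3) pq(1,2) by (simp add: field_simps)
  have e1: "p*\<sigma> + \<alpha> = \<alpha>/p + \<beta>/q" unfolding \<sigma>_def using pq pq2
    by (simp add: field_simps) (metis pq2 distrib_left mult.commute)
  have e2: "-q*\<sigma> + \<beta> = \<alpha>/p + \<beta>/q" unfolding \<sigma>_def using pq pq2
    by (simp add: field_simps) (metis pq2 distrib_left mult.commute)
  have R: "A powr (1/p) * B powr (1/q) = exp (\<alpha>/p + \<beta>/q)"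
    using A B by (simp add: powr_def \<alpha>_def \<beta>_def exp_add)
  have "exp \<sigma> powr p * A = exp (p*\<sigma> + \<alpha>)" using A by (simp add: powr_def \<alpha>_def exp_add mult.commute)
  moreover have "exp \<sigma> powr (-q) * B = exp (-q*\<sigma> + \<beta>)"
  proof -
    have "exp \<sigma> powr (-q) = exp (-q*\<sigma>)" by (simp add: powr_def mult.commute)
    moreover have "B = exp \<beta>" using B by (simp add: \<beta>_def)
    ultimately show ?thesis by (metis exp_add)
  qed
  ultimately have "exp \<sigma> powr p * A / p + exp \<sigma> powr (-q) * B / q = exp (\<alpha>/p + \<beta>/q)/p + exp (\<alpha>/p + \<beta>/q)/q"
    unfolding e1 e2 by simp
  also have "\<dots> = exp (\<alpha>/p + \<beta>/q) * (1/p + 1/q)" by (simp add: divide_inverse distrib_left)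
  also have "\<dots> = A powr (1/p) * B powr (1/q)" using pq(3) R by simp
  finally have "exp \<sigma> powr p * A / p + exp \<sigma> powr (-q) * B / q = A powr (1/p) * B powr (1/q)" .
  thus ?thesis by (intro exI[of _ "exp \<sigma>"]) simp
qed


lemma part2:
  fixes p q :: real
  assumes q1: "q > 1" and pdef: "p = q/(q-1)" and h: "2*q - p - 1 > 0"
  shows "1/6 \<le> ((q-1)/(2*q-p-1)) powr ((q-1)/q) * (beta_fn (p+1) (q+1)) powr (1/q)"
proof -
  have p1: "p > 1" unfolding pdef using q1 by (simp add: field_simps)
  have pq3: "1/p + 1/q = 1" unfolding pdef using q1 by (simp add: field_simps)
  have e1p: "(q-1)/q = 1/p" unfolding pdef using q1 by (simp add: field_simps)
  define r where "r = 1 - p/q"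
  have r: "r + p/q = 1" by (simp add: r_def)
  define c where "c = r*p"
  have c1: "c + 1 = (2*q-p-1)/(q-1)"
  proof -
    have qq: "q - 1 \<noteq> 0" "q \<noteq> 0" using q1 by auto
    have "p/q = 1/(q-1)" unfolding pdef using qq by simp
    hence rr: "r = (q-2)/(q-1)" unfolding r_def using qq by (simp add: field_simps)
    define D where "D = (q-1)*(q-1)"
    have D0: "D \<noteq> 0" using qq by (simp add: D_def)
    have "c = (q-2)*q/D" unfolding c_def rr pdef D_def by simp
    hence "c + 1 = ((q-2)*q + D)/D" using D0 by (simp add: field_simps)
    also have "(q-2)*q + D = (2*q-p-1)*(q-1)" unfolding pdef D_def using qq by (simp add: field_simps)
    also have "(2*q-p-1)*(q-1)/D = (2*q-p-1)/(q-1)" unfolding D_def using qq by simp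
    finally show ?thesis .
  qed
  have cgt: "c > -1" using c1 h q1 by (smt (verit) divide_pos_pos)
  define A where "A = (q-1)/(2*q-p-1)"
  have A0: "A > 0" using q1 h by (simp add: A_def)
  have Ac: "A = 1/(c+1)" using c1 by (simp add: A_def)
  have intU: "((\<lambda>t. t powr c) has_integral A) {0..1}"
    using has_integral_powr_from_0[OF cgt, of 1] Ac by simp
  define B where "B = beta_fn (p+1) (q+1)"
  have contV: "continuous_on {0..1} (\<lambda>t::real. t powr p * (1-t) powr q)"
    using p1 q1 by (intro continuous_on_mult continuous_on_powr' continuous_intros) auto
  have intV: "((\<lambda>t. t powr p * (1-t) powr q) has_integral B) {0..1}"
    unfolding B_def beta_fn_def using integrable_continuous_interval[OF contV]
    by (simp add: integrable_integral)
  have B0: "B \<ge> 0" by (rule has_integral_nonneg[OF intV]) auto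
  have intP: "((\<lambda>t. t*(1-t)) has_integral 1/6) {0..1::real}"
  proof -
    have "((\<lambda>t. t*(1-t)) has_integral ((\<lambda>t. t^2/2 - t^3/3) 1 - (\<lambda>t. t^2/2 - t^3/3) 0)) {0..1::real}"
      by (rule fundamental_theorem_of_calculus)
         (auto intro!: derivative_eq_intros simp: has_real_derivative_iff_has_vector_derivative[symmetric] power2_eq_square field_simps)
    thus ?thesis by simp
  qed
  have key: "1/6 \<le> s powr p * A / p + s powr (-q) * B / q" if s: "s > 0" for s
  proof (rule has_integral_le[OF intP])
    show "((\<lambda>t. s powr p * t powr c / p + s powr (-q) * (t powr p * (1-t) powr q) / q) has_integral
      (s powr p * A / p + s powr (-q) * B / q)) {0..1}"
      by (intro has_integral_add has_integral_divide has_integral_mult_right intU intV)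
    show "x*(1-x) \<le> s powr p * x powr c / p + s powr (-q) * (x powr p * (1-x) powr q) / q" if "x \<in> {0..1}" for x
      using pointwise[OF p1 q1 pq3 r s, of x] that unfolding c_def by simp
  qed
  have "1/6 \<le> A powr (1/p) * B powr (1/q)"
  proof (cases "B = 0")
    case True
    define s where "s = (p/(12*A)) powr (1/p)"
    have s0: "s > 0" using p1 A0 by (simp add: s_def)
    have "s powr p = p/(12*A)" using p1 A0 by (simp add: s_def powr_powr)
    with key[OF s0] True p1 A0 show ?thesis by simp
  next
    case False
    then have "B > 0" using B0 by simp
    from opt[OF p1 q1 pq3 A0 this] obtain s where "s > 0" "s powr p * A / p + s powr (-q) * B / q = A powr (1/p) * B powr (1/q)" by blast
    with key show ?thesis by metis
  qed
  thus ?thesis unfolding e1p A_def B_def .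
qed


lemma maxpow: "max (\<bar>a::real\<bar> ^ m) (\<bar>b\<bar> ^ m) = max \<bar>a\<bar> \<bar>b\<bar> ^ m"
proof (cases "\<bar>a\<bar> \<le> \<bar>b\<bar>")
  case True
  then show ?thesis by (simp add: max_absorb2 power_mono)
next
  case False
  then show ?thesis by (simp add: max_absorb1 power_mono)
qed

lemma maxpowr: fixes X Y q :: real assumes "X \<ge> 0" "Y \<ge> 0" "q > 0"
  shows "(max (X powr q) (Y powr q)) powr (1/q) = max X Y"
proof -
  have "max (X powr q) (Y powr q) = (max X Y) powr q"
  proof (cases "X \<le> Y")
    case True
    then have "X powr q \<le> Y powr q" using assms by (auto intro!: powr_mono2)
    then show ?thesis using True by (simp add: max_absorb2)
  next
    case False
    then have "Y powr q \<le> X powr q" using assms by (auto intro!: powr_mono2)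
    then show ?thesis using False by (simp add: max_absorb1)
  qed
  thus ?thesis using assms by (simp add: powr_powr)
qed

theorem proposition5:
  fixes a b q p :: real and n :: nat
  assumes "a < b" and "n \<ge> 2" and "q > 1" and "p = q / (q - 1)"
    and "2 * q - p - 1 > 0"
  shows "\<bar>AM (a ^ n) (b ^ n) - Ln_pow (int n) a b\<bar>
    \<le> real n * (real n - 1) * (b - a)^2 / 2
       * ((q - 1) / (2 * q - p - 1)) powr ((q - 1) / q)
       * (beta_fn (p + 1) (q + 1)) powr (1 / q)
       * (max ((\<bar>a\<bar> ^ (n - 2)) powr q) ((\<bar>b\<bar> ^ (n - 2)) powr q)) powr (1 / q)"
proof -
  obtain m where n: "n = Suc (Suc m)" using assms(2) by (metis add_2_eq_Suc le_Suc_ex)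
  define M where "M = max \<bar>a\<bar> \<bar>b\<bar> ^ m"
  define C where "C = ((q - 1) / (2 * q - p - 1)) powr ((q - 1) / q) * (beta_fn (p + 1) (q + 1)) powr (1 / q)"
  define N where "N = real n * (real n - 1) * (b - a)^2 / 2"
  have C6: "1/6 \<le> C" unfolding C_def by (rule part2[OF assms(3-5)])
  have M0: "M \<ge> 0" by (simp add: M_def)
  have N0: "N \<ge> 0" unfolding N_def using n by simp
  have mx: "(max ((\<bar>a\<bar> ^ (n - 2)) powr q) ((\<bar>b\<bar> ^ (n - 2)) powr q)) powr (1 / q) = M"
    using maxpowr[of "\<bar>a\<bar> ^ m" "\<bar>b\<bar> ^ m" q] assms(3) by (simp add: n M_def maxpow)
  have lhs: "AM (a ^ n) (b ^ n) - Ln_pow (int n) a b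
     = (a^(Suc (Suc m)) + b^(Suc (Suc m)))/2 - (b^(Suc (Suc m)+1) - a^(Suc (Suc m)+1))/((real (Suc (Suc m))+1)*(b-a))"
  proof -
    have "int n + 1 = int (n+1)" by simp
    then show ?thesis unfolding AM_def Ln_pow_def n by (simp only: power_int_of_nat of_int_of_nat_eq) simp
  qed
  have "\<bar>AM (a ^ n) (b ^ n) - Ln_pow (int n) a b\<bar> \<le> N * M / 6"
    unfolding lhs using part1[OF assms(1), of m] by (simp add: N_def M_def n mult_ac)
  also have "\<dots> \<le> N * C * M" using C6 M0 N0
    by (metis mult.commute mult_left_mono mult_nonneg_nonneg times_divide_eq_right mult_1_right le_divide_eq_numeral1(1) mult.assoc divide_inverse)
  finally show ?thesis unfolding mx[symmetric] N_def C_def by (simp add: mult.assoc)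
qed

end
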